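(* Let $\mathcal{A}$ be a unital commutative $C^*$-algebra and let $\tau:\mathcal{A}\to\mathcal{A}$ be a surjective map. Let $A,B:H_\mathcal{A}\to H_\mathcal{A}$ be injective, continuous $\tau$-quasi-modular maps with $\dim_\mathcal{A}(A(H_\mathcal{A}))\geq 2$. Suppose that for every $x\in H_\mathcal{A}$ there is $\lambda_x\in\mathcal{A}$ with $Bx=\lambda_xAx$. Then there exists $\lambda\in\mathcal{A}$ such that $B=\lambda A$.
   Context: $H_\mathcal{A}=H\otimes\mathcal{A}$ is the standard Hilbert $\mathcal{A}$-module over a separable infinite-dimensional Hilbert space $H$ (left module, inner product $\mathcal{A}$-linear in the first variable). A map $A:H_\mathcal{A}\to H_\mathcal{A}$ is called $\tau$-quasi-modular, for a map $\tau:\mathcal{A}\to\mathcal{A}$, if it is additive and $A(\lambda x)=\tau(\lambda)A(x)$ for all $\lambda\in\mathcal{A}$, $x\in H_\mathcal{A}$. $\dim_\mathcal{A}(A(H_\mathcal{A}))\ge 2$ means that $A(H_\mathcal{A})$ contains at least two nonzero mutually orthogonal elements (i.e. it is not generated by a single element). *)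

theory Defs
  imports "HOL-Analysis.Analysis"
begin

text \<open>Complex scalars are encoded by a distinguished
  element cunit with cunit*cunit = -1: the complex scalar a + b i acts as multiplication by
  scaleR a 1 + scaleR b cunit.\<close>

class cstar_ops =
  fixes cstar :: "'a \<Rightarrow> 'a"
    and cunit :: 'a

class comm_cstar_algebra = real_normed_algebra_1 + banach + comm_ring_1 + cstar_ops +
  assumes ii_sq: "cunit * cunit = - 1"
    and norm_complex_scale:
      "norm ((scaleR a 1 + scaleR b cunit) * x) = sqrt (a\<^sup>2 + b\<^sup>2) * norm x"
    and cstar_add: "cstar (x + y) = cstar x + cstar y"
    and cstar_scaleR: "cstar (scaleR r x) = scaleR r (cstar x)"
    and cstar_ii: "cstar cunit = - cunit"
    and cstar_mult: "cstar (x * y) = cstar y * cstar x"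
    and cstar_cstar: "cstar (cstar x) = x"
    and cstar_identity: "norm (cstar x * x) = (norm x)\<^sup>2"

text \<open>The standard Hilbert module H_A = l2(A): sequences x with sum x_n x_n^* norm-convergent.\<close>

definition HA :: "(nat \<Rightarrow> 'a::comm_cstar_algebra) set" where
  "HA = {x. summable (\<lambda>n. x n * cstar (x n))}"

definition hinner :: "(nat \<Rightarrow> 'a::comm_cstar_algebra) \<Rightarrow> (nat \<Rightarrow> 'a) \<Rightarrow> 'a" where
  "hinner x y = (\<Sum>n. x n * cstar (y n))"

definition hnorm :: "(nat \<Rightarrow> 'a::comm_cstar_algebra) \<Rightarrow> real" where
  "hnorm x = sqrt (norm (hinner x x))"

definition hadd :: "(nat \<Rightarrow> 'a::comm_cstar_algebra) \<Rightarrow> (nat \<Rightarrow> 'a) \<Rightarrow> nat \<Rightarrow> 'a" where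
  "hadd x y = (\<lambda>n. x n + y n)"

definition hdiff :: "(nat \<Rightarrow> 'a::comm_cstar_algebra) \<Rightarrow> (nat \<Rightarrow> 'a) \<Rightarrow> nat \<Rightarrow> 'a" where
  "hdiff x y = (\<lambda>n. x n - y n)"

definition hsmult :: "'a::comm_cstar_algebra \<Rightarrow> (nat \<Rightarrow> 'a) \<Rightarrow> nat \<Rightarrow> 'a" where
  "hsmult l x = (\<lambda>n. l * x n)"

definition hzero :: "nat \<Rightarrow> 'a::comm_cstar_algebra" where
  "hzero = (\<lambda>n. 0)"

text \<open>A map H_A \<rightarrow> H_A (only its values on H_A matter).\<close>
definition maps_HA :: "((nat \<Rightarrow> 'a::comm_cstar_algebra) \<Rightarrow> (nat \<Rightarrow> 'a)) \<Rightarrow> bool" where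
  "maps_HA T \<longleftrightarrow> (\<forall>x\<in>HA. T x \<in> HA)"

definition quasi_modular ::
  "('a::comm_cstar_algebra \<Rightarrow> 'a) \<Rightarrow> ((nat \<Rightarrow> 'a) \<Rightarrow> (nat \<Rightarrow> 'a)) \<Rightarrow> bool" where
  "quasi_modular tau T \<longleftrightarrow>
     (\<forall>x\<in>HA. \<forall>y\<in>HA. T (hadd x y) = hadd (T x) (T y)) \<and>
     (\<forall>l. \<forall>x\<in>HA. T (hsmult l x) = hsmult (tau l) (T x))"

definition continuous_HA :: "((nat \<Rightarrow> 'a::comm_cstar_algebra) \<Rightarrow> (nat \<Rightarrow> 'a)) \<Rightarrow> bool" where
  "continuous_HA T \<longleftrightarrow>
     (\<forall>x\<in>HA. \<forall>e>0. \<exists>d>0. \<forall>y\<in>HA. hnorm (hdiff y x) < d \<longrightarrow> hnorm (hdiff (T y) (T x)) < e)"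

text \<open>dim_A(T(H_A)) \<ge> 2: the image contains two nonzero mutually orthogonal elements.\<close>
definition dim_image_ge2 :: "((nat \<Rightarrow> 'a::comm_cstar_algebra) \<Rightarrow> (nat \<Rightarrow> 'a)) \<Rightarrow> bool" where
  "dim_image_ge2 T \<longleftrightarrow>
     (\<exists>u\<in>T ` HA. \<exists>v\<in>T ` HA. u \<noteq> hzero \<and> v \<noteq> hzero \<and> hinner u v = 0)"

end

theory Submission
  imports Defs
begin

lemma cstar_reduced:
  fixes y :: "'a::comm_cstar_algebra"
  assumes "y * y = 0" shows "y = 0"
proof -
  define z where "z = cstar y * y"
  have cz: "cstar z = z" unfolding z_def by (simp add: cstar_mult cstar_cstar)
  have "cstar z * z = cstar y * cstar y * (y * y)"
    using cz unfolding z_def by (simp add: ac_simps)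
  also have "\<dots> = 0" using assms by simp
  finally have "(norm z)\<^sup>2 = 0" using cstar_identity[of z] by simp
  hence "z = 0" by simp
  hence "(norm y)\<^sup>2 = 0" using cstar_identity[of y] unfolding z_def by simp
  thus ?thesis by simp
qed

lemma HA_smult:
  assumes "x \<in> HA" shows "hsmult l x \<in> HA"
proof -
  have "summable (\<lambda>n. x n * cstar (x n))" using assms by (simp add: HA_def)
  hence "summable (\<lambda>n. (l * cstar l) * (x n * cstar (x n)))" by (rule summable_mult)
  moreover have "\<And>n. (l * x n) * cstar (l * x n) = (l * cstar l) * (x n * cstar (x n))"
    by (simp add: cstar_mult ac_simps)
  ultimately show ?thesis by (simp add: HA_def hsmult_def)
qed

lemma HA_add0:
  assumes "x \<in> HA" and "\<forall>n>0. y n = 0" shows "hadd x y \<in> HA"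
proof -
  have "summable (\<lambda>n. x n * cstar (x n))" using assms by (simp add: HA_def)
  hence "summable (\<lambda>n. x (Suc n) * cstar (x (Suc n)))"
    using summable_Suc_iff[of "\<lambda>n. x n * cstar (x n)"] by simp
  moreover have "\<And>n. (x (Suc n) + y (Suc n)) * cstar (x (Suc n) + y (Suc n))
      = x (Suc n) * cstar (x (Suc n))" using assms(2) by simp
  ultimately have "summable (\<lambda>n. (x (Suc n) + y (Suc n)) * cstar (x (Suc n) + y (Suc n)))"
    by simp
  hence "summable (\<lambda>n. (x n + y n) * cstar (x n + y n))"
    using summable_Suc_iff[of "\<lambda>n. (x n + y n) * cstar (x n + y n)"] by simp
  thus ?thesis by (simp add: HA_def hadd_def)
qed

lemma alg_delta:
  fixes mu l1 l2 a1 a2 b1 b2 :: "'a::comm_ring_1"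
  assumes "mu * (a1 + a2) = l1 * a1 + l2 * a2" "mu * (b1 + b2) = l1 * b1 + l2 * b2"
  shows "(l1 - l2) * (a1 * b2 - b1 * a2) = 0"
proof -
  have ea: "(mu - l1) * a1 = (l2 - mu) * a2" using assms(1) by (simp add: algebra_simps)
  have eb: "(mu - l1) * b1 = (l2 - mu) * b2" using assms(2) by (simp add: algebra_simps)
  have 1: "(mu - l1) * (a1 * b2 - b1 * a2) = 0"
  proof -
    have "(mu - l1) * (a1 * b2 - b1 * a2) = ((mu - l1) * a1) * b2 - ((mu - l1) * b1) * a2"
      by (simp add: algebra_simps)
    also have "\<dots> = ((l2 - mu) * a2) * b2 - ((l2 - mu) * b2) * a2" using ea eb by simp
    finally show ?thesis by (simp add: algebra_simps)
  qed
  have 2: "(l2 - mu) * (a1 * b2 - b1 * a2) = 0"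
  proof -
    have "(l2 - mu) * (a1 * b2 - b1 * a2) = ((l2 - mu) * b2) * a1 - ((l2 - mu) * a2) * b1"
      by (simp add: algebra_simps)
    also have "\<dots> = ((mu - l1) * b1) * a1 - ((mu - l1) * a1) * b1" using ea eb by simp
    finally show ?thesis by (simp add: algebra_simps)
  qed
  have "(l1 - l2) * (a1 * b2 - b1 * a2) = - ((mu - l1) * (a1 * b2 - b1 * a2)) - (l2 - mu) * (a1 * b2 - b1 * a2)"
    by (simp add: algebra_simps)
  thus ?thesis using 1 2 by simp
qed

lemma alg_main:
  fixes mu l1 l2 a1 a2 b1 b2 :: "'a::comm_cstar_algebra"
  assumes "mu * (a1 + a2) = l1 * a1 + l2 * a2" "mu * (b1 + b2) = l1 * b1 + l2 * b2"
    and "(l1 - l2) * (a1 * a2) = 0" "(l1 - l2) * (b1 * b2) = 0"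
  shows "((l1 - l2) * a1) * b2 = 0"
proof -
  define d where "d = l1 - l2"
  have D: "d * (a1 * b2) = d * (b1 * a2)" using alg_delta[OF assms(1,2)]
    unfolding d_def by (simp add: algebra_simps)
  have "(d * a1 * b2) * (d * a1 * b2) = (d * (a1 * b2)) * (d * a1 * b2)" by (simp add: ac_simps)
  also have "\<dots> = (d * (b1 * a2)) * (d * a1 * b2)" using D by simp
  also have "\<dots> = (d * (a1 * a2)) * (d * (b1 * b2))" by (simp add: ac_simps)
  also have "\<dots> = 0" using assms(3) unfolding d_def by simp
  finally show ?thesis using cstar_reduced unfolding d_def by blast
qed

theorem lemma9:
  fixes tau :: "'a::comm_cstar_algebra \<Rightarrow> 'a"
    and A B :: "(nat \<Rightarrow> 'a) \<Rightarrow> (nat \<Rightarrow> 'a)"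
  assumes "surj tau"
    and "maps_HA A" and "maps_HA B"
    and "inj_on A HA" and "inj_on B HA"
    and "continuous_HA A" and "continuous_HA B"
    and "quasi_modular tau A" and "quasi_modular tau B"
    and "dim_image_ge2 A"
    and "\<forall>x\<in>HA. \<exists>l. B x = hsmult l (A x)"
  shows "\<exists>l. \<forall>x\<in>HA. B x = hsmult l (A x)"
proof -
  have addA: "\<And>x y. x \<in> HA \<Longrightarrow> y \<in> HA \<Longrightarrow> A (hadd x y) = hadd (A x) (A y)"
   and smA: "\<And>l x. x \<in> HA \<Longrightarrow> A (hsmult l x) = hsmult (tau l) (A x)"
    using assms(8) unfolding quasi_modular_def by auto
  have addB: "\<And>x y. x \<in> HA \<Longrightarrow> y \<in> HA \<Longrightarrow> B (hadd x y) = hadd (B x) (B y)"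
   and smB: "\<And>l x. x \<in> HA \<Longrightarrow> B (hsmult l x) = hsmult (tau l) (B x)"
    using assms(9) unfolding quasi_modular_def by auto
  have z0: "hzero \<in> HA" by (simp add: HA_def hzero_def)
  define e0 :: "nat \<Rightarrow> 'a" where "e0 = (\<lambda>n. if n = 0 then 1 else 0)"
  have e0sup: "\<forall>n>0. e0 n = 0" by (simp add: e0_def)
  have e0HA: "e0 \<in> HA" using HA_add0[OF z0 e0sup] by (simp add: hadd_def hzero_def)
  have A0: "A hzero = hzero"
  proof -
    have "hadd hzero hzero = (hzero :: nat \<Rightarrow> 'a)" by (simp add: hadd_def hzero_def)
    hence eq: "A hzero = hadd (A hzero) (A hzero)" using addA[OF z0 z0] by simp
    have "\<And>n. A hzero n = 0"
    proof -
      fix n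
      have "A hzero n = A hzero n + A hzero n" using fun_cong[OF eq, of n] by (simp only: hadd_def)
      thus "A hzero n = 0" by simp
    qed
    thus ?thesis by (auto simp: hzero_def)
  qed
  have sm0: "\<And>x. hsmult 0 x = (hzero :: nat \<Rightarrow> 'a)" by (simp add: hsmult_def hzero_def)
  have ann: "\<And>c. (\<forall>m. c * A e0 m = 0) \<Longrightarrow> c = tau 0"
  proof -
    fix c assume h: "\<forall>m. c * A e0 m = 0"
    obtain l where l: "c = tau l" using assms(1) by (metis surjD)
    have "A (hsmult l e0) = hzero" using smA[OF e0HA] h l by (auto simp: hsmult_def hzero_def)
    hence "A (hsmult l e0) = A hzero" using A0 by simp
    hence "hsmult l e0 = hzero" by (rule inj_onD[OF assms(4) _ HA_smult[OF e0HA] z0])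
    hence "hsmult l e0 0 = hzero 0" by simp
    hence "l = 0" by (simp add: hsmult_def hzero_def e0_def)
    thus "c = tau 0" using l by simp
  qed
  have tau0: "tau 0 = 0"
  proof -
    have "hsmult (tau 0) (A e0) = hzero" using smA[OF e0HA, of 0] A0 sm0 by simp
    hence "\<forall>m. tau 0 * A e0 m = 0" by (simp add: hsmult_def hzero_def fun_eq_iff)
    hence "\<forall>m. (tau 0 + tau 0) * A e0 m = 0" by (simp only: distrib_right) simp
    hence "tau 0 + tau 0 = tau 0" using ann by blast
    thus ?thesis by simp
  qed
  have faith: "\<And>c. (\<forall>m. c * A e0 m = 0) \<Longrightarrow> c = 0" using ann tau0 by simp
  obtain l2 where l2: "B e0 = hsmult l2 (A e0)" using assms(11) e0HA by blast
  have "\<forall>x\<in>HA. B x = hsmult l2 (A x)"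
  proof
    fix x :: "nat \<Rightarrow> 'a" assume xH: "x \<in> HA"
    obtain l1 where l1: "B x = hsmult l1 (A x)" using assms(11) xH by blast
    have I: "\<And>n. (l1 - l2) * (A x n * A e0 n) = 0"
    proof -
      fix n
      obtain p where p: "tau p = A e0 n" using assms(1) by (metis surjD)
      obtain r where r: "tau r = - A x n" using assms(1) by (metis surjD)
      define v where "v = hadd (hsmult p x) (hsmult r e0)"
      have pH: "hsmult p x \<in> HA" using HA_smult[OF xH] .
      have rH: "hsmult r e0 \<in> HA" using HA_smult[OF e0HA] .
      have vH: "v \<in> HA" unfolding v_def
        by (rule HA_add0[OF pH]) (simp add: hsmult_def e0_def)
      obtain mu where mu: "B v = hsmult mu (A v)" using assms(11) vH by blast
      have Av: "A v n = 0" unfolding v_def using addA[OF pH rH] smA[OF xH] smA[OF e0HA] p r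
        by (simp add: hadd_def hsmult_def ac_simps)
      have "B v n = A e0 n * (l1 * A x n) + (- A x n) * (l2 * A e0 n)"
        unfolding v_def using addB[OF pH rH] smB[OF xH] smB[OF e0HA] p r l1 l2
        by (simp add: hadd_def hsmult_def)
      moreover have "B v n = 0" using mu Av by (simp add: hsmult_def)
      ultimately show "(l1 - l2) * (A x n * A e0 n) = 0" by (simp add: algebra_simps)
    qed
    define s where "s = hadd x e0"
    have sH: "s \<in> HA" unfolding s_def by (rule HA_add0[OF xH e0sup])
    obtain mu where mu: "B s = hsmult mu (A s)" using assms(11) sH by blast
    have II: "\<And>m. mu * (A x m + A e0 m) = l1 * A x m + l2 * A e0 m"
    proof -
      fix m
      have "B s m = l1 * A x m + l2 * A e0 m"
        unfolding s_def using addB[OF xH e0HA] l1 l2 by (simp add: hadd_def hsmult_def)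
      moreover have "B s m = mu * (A x m + A e0 m)"
        using mu unfolding s_def using addA[OF xH e0HA] by (simp add: hadd_def hsmult_def)
      ultimately show "mu * (A x m + A e0 m) = l1 * A x m + l2 * A e0 m" by simp
    qed
    have "\<And>m. (l1 - l2) * A x m = 0"
    proof -
      fix m
      have "\<forall>n. ((l1 - l2) * A x m) * A e0 n = 0"
        using alg_main[OF II II I I] by blast
      thus "(l1 - l2) * A x m = 0" using faith by blast
    qed
    hence "\<And>m. l1 * A x m = l2 * A x m" by (simp add: algebra_simps)
    thus "B x = hsmult l2 (A x)" using l1 by (simp add: hsmult_def)
  qed
  thus ?thesis by blast
qed

end
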